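(* Let $A$ be a Keigher ring and $X=\operatorname{Spec}^\Delta A$. Let $\varphi(X)\colon\mathcal O(X)\to\mathcal O'(X)$ be the homomorphism $\varphi(X)(f)(\mathfrak p)=f(\mathfrak p)\bmod \mathfrak pA_{\mathfrak p}$ (the image of $f(\mathfrak p)\in A_{\mathfrak p}$ in the residue field $A_{\mathfrak p}/\mathfrak pA_{\mathfrak p}=K(\mathfrak p)$). Then $\ker\varphi(X)$ equals the nilradical of $\mathcal O(X)$.
   Context: All rings are commutative with unit. A differential ring is a ring with finitely many pairwise commuting derivations. A Keigher ring is a differential ring in which the radical $\{x: x^n\in\mathfrak a\text{ for some }n\}$ of every differential ideal $\mathfrak a$ is again a differential ideal. $X=\operatorname{Spec}^\Delta A$ is the set of prime ideals of $A$ closed under all derivations, with the Kolchin topology (closed sets $V(E)=\{\mathfrak p: E\subseteq\mathfrak p\}$). For $\mathfrak p\in X$, $A_{\mathfrak p}$ is the localization at $A\setminus\mathfrak p$ and $K(\mathfrak p)$ is the fraction field of $A/\mathfrak p$. Structure sheaf: for open $U\subseteq X$, $\mathcal O(U)$ is the set of functions $f$ on $U$ with $f(\mathfrak p)\in A_{\mathfrak p}$ that are regular at every point of $U$, where $f$ is regular at $\mathfrak p$ if there exist an open neighborhood $W\subseteq U$ of $\mathfrak p$ and $a,b\in A$ with $b\notin\mathfrak q$ and $f(\mathfrak q)=a/b$ in $A_{\mathfrak q}$ for all $\mathfrak q\in W$; it is a differential ring with pointwise operations and derivations. Analogously, $\mathcal O'(U)$ is the set of functions $f$ on $U$ with $f(\mathfrak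 p)\in K(\mathfrak p)$ that are regular at every point of $U$, where regularity means locally $f(\mathfrak q)=a/b$ in $K(\mathfrak q)$ with $b\notin\mathfrak q$. *)

theory Defs
  imports Main
begin

definition is_derivation :: "('a::comm_ring_1 \<Rightarrow> 'a) \<Rightarrow> bool" where
  "is_derivation d \<longleftrightarrow>
     (\<forall>x y. d (x + y) = d x + d y) \<and> (\<forall>x y. d (x * y) = x * d y + d x * y)"

definition differential_ring :: "('a::comm_ring_1 \<Rightarrow> 'a) set \<Rightarrow> bool" where
  "differential_ring \<Delta> \<longleftrightarrow> finite \<Delta> \<and> (\<forall>d\<in>\<Delta>. is_derivation d)
      \<and> (\<forall>d\<in>\<Delta>. \<forall>e\<in>\<Delta>. d \<circ> e = e \<circ> d)"

definition is_ideal :: "'a::comm_ring_1 set \<Rightarrow> bool" where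
  "is_ideal I \<longleftrightarrow> 0 \<in> I \<and> (\<forall>x\<in>I. \<forall>y\<in>I. x + y \<in> I) \<and> (\<forall>x\<in>I. - x \<in> I)
      \<and> (\<forall>r x. x \<in> I \<longrightarrow> r * x \<in> I)"

definition is_prime_ideal :: "'a::comm_ring_1 set \<Rightarrow> bool" where
  "is_prime_ideal P \<longleftrightarrow> is_ideal P \<and> 1 \<notin> P \<and> (\<forall>x y. x * y \<in> P \<longrightarrow> x \<in> P \<or> y \<in> P)"

definition differential_ideal :: "('a::comm_ring_1 \<Rightarrow> 'a) set \<Rightarrow> 'a set \<Rightarrow> bool" where
  "differential_ideal \<Delta> I \<longleftrightarrow> is_ideal I \<and> (\<forall>d\<in>\<Delta>. \<forall>x\<in>I. d x \<in> I)"

definition radical :: "'a::comm_ring_1 set \<Rightarrow> 'a set" where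
  "radical I = {x. \<exists>n. x ^ n \<in> I}"

definition keigher_ring :: "('a::comm_ring_1 \<Rightarrow> 'a) set \<Rightarrow> bool" where
  "keigher_ring \<Delta> \<longleftrightarrow> differential_ring \<Delta> \<and>
     (\<forall>I. differential_ideal \<Delta> I \<longrightarrow> differential_ideal \<Delta> (radical I))"

text \<open>Differential spectrum and Kolchin topology (open sets = complements of V(E)).\<close>

definition dspec :: "('a::comm_ring_1 \<Rightarrow> 'a) set \<Rightarrow> 'a set set" where
  "dspec \<Delta> = {P. is_prime_ideal P \<and> (\<forall>d\<in>\<Delta>. \<forall>x\<in>P. d x \<in> P)}"

definition kolchin_open :: "('a::comm_ring_1 \<Rightarrow> 'a) set \<Rightarrow> 'a set set \<Rightarrow> bool" where
  "kolchin_open \<Delta> W \<longleftrightarrow> (\<exists>E. W = {Q \<in> dspec \<Delta>. \<not> E \<subseteq> Q})"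

text \<open>The element a/s of A_p (s not in p): the class of (a,s) under
  (a,s) ~ (b,t) iff u(at - bs) = 0 for some u not in p.\<close>
definition lfrac :: "'a::comm_ring_1 set \<Rightarrow> 'a \<Rightarrow> 'a \<Rightarrow> ('a \<times> 'a) set" where
  "lfrac P a s = {(b, t). t \<notin> P \<and> (\<exists>u. u \<notin> P \<and> u * (a * t - b * s) = 0)}"

definition loc :: "'a::comm_ring_1 set \<Rightarrow> ('a \<times> 'a) set set" where
  "loc P = {lfrac P a s | a s. s \<notin> P}"

definition loc_mult :: "'a::comm_ring_1 set \<Rightarrow> ('a \<times> 'a) set \<Rightarrow> ('a \<times> 'a) set \<Rightarrow> ('a \<times> 'a) set" where
  "loc_mult P c d = {(x, w). w \<notin> P \<and> (\<exists>a s b t. (a, s) \<in> c \<and> (b, t) \<in> d \<and>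
       (\<exists>u. u \<notin> P \<and> u * (x * (s * t) - (a * b) * w) = 0))}"

fun loc_pow :: "'a::comm_ring_1 set \<Rightarrow> ('a \<times> 'a) set \<Rightarrow> nat \<Rightarrow> ('a \<times> 'a) set" where
  "loc_pow P c 0 = lfrac P 1 1"
| "loc_pow P c (Suc n) = loc_mult P c (loc_pow P c n)"

text \<open>The element a/s of K(p) = Frac(A/p): the class of (a,s) under (a,s) ~ (b,t) iff at - bs in p.\<close>
definition kfrac :: "'a::comm_ring_1 set \<Rightarrow> 'a \<Rightarrow> 'a \<Rightarrow> ('a \<times> 'a) set" where
  "kfrac P a s = {(b, t). t \<notin> P \<and> a * t - b * s \<in> P}"

text \<open>Residue map A_p \<rightarrow> A_p / pA_p = K(p), a/s \<mapsto> a/s.\<close>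
definition residue :: "'a::comm_ring_1 set \<Rightarrow> ('a \<times> 'a) set \<Rightarrow> ('a \<times> 'a) set" where
  "residue P c = {(b, t). t \<notin> P \<and> (\<exists>a s. (a, s) \<in> c \<and> a * t - b * s \<in> P)}"

definition regular_at ::
  "('a::comm_ring_1 \<Rightarrow> 'a) set \<Rightarrow> 'a set set \<Rightarrow> ('a set \<Rightarrow> ('a \<times> 'a) set) \<Rightarrow> 'a set \<Rightarrow> bool" where
  "regular_at \<Delta> U f P \<longleftrightarrow> (\<exists>W a b. kolchin_open \<Delta> W \<and> P \<in> W \<and> W \<subseteq> U \<and>
      (\<forall>Q\<in>W. b \<notin> Q \<and> f Q = lfrac Q a b))"

text \<open>O(U): functions on U (extended by the empty set outside U) with f(p) in A_p, regular everywhere.\<close>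
definition sheafO ::
  "('a::comm_ring_1 \<Rightarrow> 'a) set \<Rightarrow> 'a set set \<Rightarrow> ('a set \<Rightarrow> ('a \<times> 'a) set) set" where
  "sheafO \<Delta> U = {f. (\<forall>P\<in>U. f P \<in> loc P \<and> regular_at \<Delta> U f P) \<and> (\<forall>P. P \<notin> U \<longrightarrow> f P = {})}"

definition phi :: "'a::comm_ring_1 set set \<Rightarrow> ('a set \<Rightarrow> ('a \<times> 'a) set) \<Rightarrow> 'a set \<Rightarrow> ('a \<times> 'a) set" where
  "phi U f = (\<lambda>P. if P \<in> U then residue P (f P) else {})"

text \<open>Nilradical of O(U): ring operations on O(U) are pointwise, so f^n = 0 in O(U)
  means f(p)^n = 0 in A_p for all p in U.\<close>
definition nilradicalO ::
  "('a::comm_ring_1 \<Rightarrow> 'a) set \<Rightarrow> 'a set set \<Rightarrow> ('a set \<Rightarrow> ('a \<times> 'a) set) set" where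
  "nilradicalO \<Delta> U = {f \<in> sheafO \<Delta> U. \<exists>n. \<forall>P\<in>U. loc_pow P (f P) n = lfrac P 0 1}"

definition kernel_phi ::
  "('a::comm_ring_1 \<Rightarrow> 'a) set \<Rightarrow> 'a set set \<Rightarrow> ('a set \<Rightarrow> ('a \<times> 'a) set) set" where
  "kernel_phi \<Delta> U = {f \<in> sheafO \<Delta> U. \<forall>P\<in>U. phi U f P = kfrac P 0 1}"

end

theory Submission imports Defs begin


lemma ideal_mult_l: "is_ideal I \<Longrightarrow> x \<in> I \<Longrightarrow> r * x \<in> I"
  by (simp add: is_ideal_def)
lemma ideal_mult_r: "is_ideal I \<Longrightarrow> x \<in> I \<Longrightarrow> x * r \<in> I"
  by (metis ideal_mult_l mult.commute)
lemma ideal_add: "is_ideal I \<Longrightarrow> x \<in> I \<Longrightarrow> y \<in> I \<Longrightarrow> x + y \<in> I"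
  by (simp add: is_ideal_def)
lemma ideal_uminus: "is_ideal I \<Longrightarrow> x \<in> I \<Longrightarrow> - x \<in> I"
  by (simp add: is_ideal_def)
lemma ideal_diff: "is_ideal I \<Longrightarrow> x \<in> I \<Longrightarrow> y \<in> I \<Longrightarrow> x - y \<in> I"
  by (metis ideal_add ideal_uminus diff_conv_add_uminus)
lemma ideal_zero: "is_ideal I \<Longrightarrow> 0 \<in> I"
  by (simp add: is_ideal_def)

lemma prime_notin_mult: "is_prime_ideal P \<Longrightarrow> s \<notin> P \<Longrightarrow> t \<notin> P \<Longrightarrow> s * t \<notin> P"
  unfolding is_prime_ideal_def by blast
lemma prime_one: "is_prime_ideal P \<Longrightarrow> 1 \<notin> P"
  by (simp add: is_prime_ideal_def)
lemma prime_pow: "is_prime_ideal P \<Longrightarrow> s \<notin> P \<Longrightarrow> s ^ n \<notin> P"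
  by (induction n) (auto simp: prime_one prime_notin_mult)
lemma prime_ideal: "is_prime_ideal P \<Longrightarrow> is_ideal P"
  by (simp add: is_prime_ideal_def)

lemma deriv_zero: "is_derivation d \<Longrightarrow> d 0 = 0"
  unfolding is_derivation_def by (metis add_cancel_right_right add_0)

lemma lfrac_self: "is_prime_ideal P \<Longrightarrow> s \<notin> P \<Longrightarrow> (a, s) \<in> lfrac P a s"
  unfolding lfrac_def using prime_one by fastforce

lemma loc_mult_lfrac:
  assumes P: "is_prime_ideal P" and s: "s \<notin> P" and t: "t \<notin> P"
  shows "loc_mult P (lfrac P a s) (lfrac P b t) = lfrac P (a*b) (s*t)"
proof (rule set_eqI, clarify)
  fix x w
  show "(x, w) \<in> loc_mult P (lfrac P a s) (lfrac P b t) \<longleftrightarrow> (x, w) \<in> lfrac P (a*b) (s*t)"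
  proof
    assume "(x, w) \<in> loc_mult P (lfrac P a s) (lfrac P b t)"
    then obtain a' s' b' t' u where w: "w \<notin> P" and h1: "(a', s') \<in> lfrac P a s"
      and h2: "(b', t') \<in> lfrac P b t" and u: "u \<notin> P" and h3: "u * (x * (s' * t') - (a' * b') * w) = 0"
      unfolding loc_mult_def by blast
    from h1 obtain v where s': "s' \<notin> P" and v: "v \<notin> P" and e1: "v * (a * s' - a' * s) = 0"
      unfolding lfrac_def by blast
    from h2 obtain v' where t': "t' \<notin> P" and v': "v' \<notin> P" and e2: "v' * (b * t' - b' * t) = 0"
      unfolding lfrac_def by blast
    have "(u * v * v' * s' * t') * (a * b * w - x * (s * t)) = 0"
    proof -
      have E1: "v * a * s' = v * a' * s" using e1 by (simp add: algebra_simps)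
      have E2: "v' * b * t' = v' * b' * t" using e2 by (simp add: algebra_simps)
      have E3: "u * x * s' * t' = u * a' * b' * w" using h3 by (simp add: algebra_simps)
      have "u * v * v' * s' * t' * a * b * w = u * w * (v * a * s') * (v' * b * t')" by (simp add: algebra_simps)
      also have "\<dots> = u * w * (v * a' * s) * (v' * b' * t)" using E1 E2 by simp
      also have "\<dots> = v * v' * s * t * (u * a' * b' * w)" by (simp add: algebra_simps)
      also have "\<dots> = v * v' * s * t * (u * x * s' * t')" using E3 by simp
      finally show ?thesis by (simp add: algebra_simps)
    qed
    moreover have "u * v * v' * s' * t' \<notin> P"
      using P u v v' s' t' by (simp add: prime_notin_mult)
    ultimately show "(x, w) \<in> lfrac P (a*b) (s*t)"
      unfolding lfrac_def using w by blast
  next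
    assume "(x, w) \<in> lfrac P (a*b) (s*t)"
    then obtain u where w: "w \<notin> P" and u: "u \<notin> P" and e: "u * (a * b * w - x * (s * t)) = 0"
      unfolding lfrac_def by blast
    have "u * (x * (s * t) - (a * b) * w) = 0" using e by (simp add: algebra_simps)
    then show "(x, w) \<in> loc_mult P (lfrac P a s) (lfrac P b t)"
      unfolding loc_mult_def using w u lfrac_self[OF P s, of a] lfrac_self[OF P t, of b] by blast
  qed
qed

lemma loc_pow_lfrac:
  assumes P: "is_prime_ideal P" and s: "s \<notin> P"
  shows "loc_pow P (lfrac P a s) n = lfrac P (a^n) (s^n)"
  by (induction n) (simp_all add: loc_mult_lfrac P s prime_pow)


lemma colon_diff_ideal:
  assumes D: "\<forall>d\<in>\<Delta>. is_derivation d" and M: "differential_ideal \<Delta> M" and R: "radical M = M"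
  shows "differential_ideal \<Delta> {y. y * c \<in> M}"
proof -
  have I: "is_ideal M" using M by (simp add: differential_ideal_def)
  have rad: "z * z \<in> M \<Longrightarrow> z \<in> M" for z
  proof -
    assume "z * z \<in> M" then have "z ^ 2 \<in> M" by (simp add: power2_eq_square)
    then have "z \<in> radical M" unfolding radical_def by blast
    then show ?thesis using R by simp
  qed
  have "is_ideal {y. y * c \<in> M}"
    unfolding is_ideal_def using I
    by (auto simp: ideal_zero ideal_add ideal_uminus distrib_right mult.assoc ideal_mult_l)
  moreover have "d y * c \<in> M" if d: "d \<in> \<Delta>" and y: "y * c \<in> M" for d y
  proof -
    have der: "is_derivation d" using D d by blast
    have "d (y * c) \<in> M" using M d y by (simp add: differential_ideal_def)
    then have dy: "y * d c + d y * c \<in> M" using der by (simp add: is_derivation_def)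
    have "(d y * c) * (d y * c) = (d y * c) * (y * d c + d y * c) - (d y * d c) * (y * c)"
      by (simp add: algebra_simps)
    also have "\<dots> \<in> M" using dy y I by (simp add: ideal_diff ideal_mult_l)
    finally show ?thesis by (rule rad)
  qed
  ultimately show ?thesis unfolding differential_ideal_def by blast
qed

lemma pow_in_ideal_mono: "is_ideal I \<Longrightarrow> z ^ n \<in> I \<Longrightarrow> n \<le> m \<Longrightarrow> z ^ m \<in> I"
  by (metis ideal_mult_l le_add_diff_inverse2 power_add)

lemma exists_dprime:
  assumes K: "keigher_ring \<Delta>" and J: "differential_ideal \<Delta> J" and x: "\<forall>n. x ^ n \<notin> J"
  shows "\<exists>Q\<in>dspec \<Delta>. J \<subseteq> Q \<and> x \<notin> Q"
proof -
  have D: "\<forall>d\<in>\<Delta>. is_derivation d" using K by (simp add: keigher_ring_def differential_ring_def)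
  define A where "A = {I. differential_ideal \<Delta> I \<and> J \<subseteq> I \<and> (\<forall>n. x ^ n \<notin> I)}"
  have "\<exists>M\<in>A. \<forall>X\<in>A. M \<subseteq> X \<longrightarrow> X = M"
  proof (rule subset_Zorn_nonempty)
    show "A \<noteq> {}" using J x unfolding A_def by blast
  next
    fix C assume Cne: "C \<noteq> {}" and ch: "subset.chain A C"
    have CA: "C \<subseteq> A" and lin: "\<And>X Y. X \<in> C \<Longrightarrow> Y \<in> C \<Longrightarrow> X \<subseteq> Y \<or> Y \<subseteq> X"
      using ch by (auto simp: subset.chain_def)
    have memC: "\<And>X. X \<in> C \<Longrightarrow> differential_ideal \<Delta> X \<and> J \<subseteq> X \<and> (\<forall>n. x ^ n \<notin> X)"
      using CA unfolding A_def by blast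
    obtain X0 where X0: "X0 \<in> C" using Cne by blast
    have "is_ideal (\<Union>C)"
      unfolding is_ideal_def
    proof (intro conjI ballI allI impI)
      show "0 \<in> \<Union>C" using X0 memC[OF X0] by (auto simp: differential_ideal_def is_ideal_def)
    next
      fix a b assume "a \<in> \<Union>C" "b \<in> \<Union>C"
      then obtain X Y where XY: "X \<in> C" "Y \<in> C" "a \<in> X" "b \<in> Y" by blast
      show "a + b \<in> \<Union>C"
      proof (cases "X \<subseteq> Y")
        case True
        then have "a + b \<in> Y" using XY memC[OF XY(2)]
          by (auto simp: differential_ideal_def is_ideal_def)
        then show ?thesis using XY by blast
      next
        case False
        then have "Y \<subseteq> X" using lin[OF XY(1,2)] by blast
        then have "a + b \<in> X" using XY memC[OF XY(1)]
          by (auto simp: differential_ideal_def is_ideal_def)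
        then show ?thesis using XY by blast
      qed
    next
      fix a assume "a \<in> \<Union>C"
      then obtain X where X: "X \<in> C" "a \<in> X" by blast
      then have "- a \<in> X" using memC[OF X(1)] by (simp add: differential_ideal_def is_ideal_def)
      then show "- a \<in> \<Union>C" using X by blast
    next
      fix r a assume "a \<in> \<Union>C"
      then obtain X where X: "X \<in> C" "a \<in> X" by blast
      then have "r * a \<in> X" using memC[OF X(1)] by (simp add: differential_ideal_def is_ideal_def)
      then show "r * a \<in> \<Union>C" using X by blast
    qed
    moreover have "\<forall>d\<in>\<Delta>. \<forall>a\<in>\<Union>C. d a \<in> \<Union>C"
    proof (intro ballI)
      fix d a assume d: "d \<in> \<Delta>" and "a \<in> \<Union>C"
      then obtain X where X: "X \<in> C" "a \<in> X" by blast
      then have "d a \<in> X" using memC[OF X(1)] d by (simp add: differential_ideal_def)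
      then show "d a \<in> \<Union>C" using X by blast
    qed
    moreover have "J \<subseteq> \<Union>C" using X0 memC by blast
    moreover have "\<forall>n. x ^ n \<notin> \<Union>C" using memC by blast
    ultimately show "\<Union>C \<in> A" unfolding A_def differential_ideal_def by blast
  qed
  then obtain M where MA: "M \<in> A" and max: "\<And>X. X \<in> A \<Longrightarrow> M \<subseteq> X \<Longrightarrow> X = M" by blast
  have Md: "differential_ideal \<Delta> M" and JM: "J \<subseteq> M" and xM: "\<And>n. x ^ n \<notin> M"
    using MA unfolding A_def by auto
  have MI: "is_ideal M" using Md by (simp add: differential_ideal_def)
  have "radical M \<in> A"
  proof -
    have "differential_ideal \<Delta> (radical M)" using K Md by (simp add: keigher_ring_def)
    moreover have "M \<subseteq> radical M" unfolding radical_def by (metis (mono_tags) mem_Collect_eq power_one_right subsetI)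
    moreover have "x ^ n \<notin> radical M" for n
    proof
      assume "x ^ n \<in> radical M"
      then obtain k where "(x ^ n) ^ k \<in> M" unfolding radical_def by blast
      then show False using xM by (metis power_mult)
    qed
    ultimately show ?thesis unfolding A_def using JM by blast
  qed
  moreover have "M \<subseteq> radical M" unfolding radical_def by (metis (mono_tags) mem_Collect_eq power_one_right subsetI)
  ultimately have R: "radical M = M" using max by blast
  have colonA: "{y. y * c \<in> M} = M" if "\<forall>n. x ^ n * c \<notin> M" for c
  proof (rule max)
    show "{y. y * c \<in> M} \<in> A" unfolding A_def
      using colon_diff_ideal[OF D Md R, of c] JM MI that by (auto intro: ideal_mult_r)
    show "M \<subseteq> {y. y * c \<in> M}" using MI by (auto intro: ideal_mult_r)
  qed
  have prime: "a \<in> M \<or> b \<in> M" if ab: "a * b \<in> M" for a b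
  proof (rule ccontr)
    assume "\<not> (a \<in> M \<or> b \<in> M)"
    then have a: "a \<notin> M" and b: "b \<notin> M" by auto
    have "\<exists>n. x ^ n * b \<in> M"
    proof (rule ccontr)
      assume "\<nexists>n. x ^ n * b \<in> M"
      then have "{y. y * b \<in> M} = M" using colonA by blast
      then show False using ab a by blast
    qed
    then obtain i where i: "x ^ i * b \<in> M" by blast
    have "\<exists>n. x ^ n * x ^ i \<in> M"
    proof (rule ccontr)
      assume "\<nexists>n. x ^ n * x ^ i \<in> M"
      then have "{y. y * x ^ i \<in> M} = M" using colonA by blast
      then show False using i b by (auto simp: mult.commute)
    qed
    then show False using xM by (metis power_add)
  qed
  have "1 \<notin> M" using xM[of 0] by simp
  then have "is_prime_ideal M" unfolding is_prime_ideal_def using MI prime by blast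
  then have "M \<in> dspec \<Delta>" using Md unfolding dspec_def differential_ideal_def by blast
  moreover have "x \<notin> M" using xM[of 1] by simp
  ultimately show ?thesis using JM by blast
qed


lemma prime_mult_in: "is_prime_ideal P \<Longrightarrow> x * y \<in> P \<Longrightarrow> x \<in> P \<or> y \<in> P"
  unfolding is_prime_ideal_def by blast

lemma lfrac_zero:
  assumes P: "is_prime_ideal Q" and e: "e \<notin> Q" and s: "s \<notin> Q" and ec: "e * c = 0"
  shows "lfrac Q c s = lfrac Q 0 1"
proof (rule set_eqI, clarify)
  fix x w
  show "(x, w) \<in> lfrac Q c s \<longleftrightarrow> (x, w) \<in> lfrac Q 0 1"
  proof
    assume "(x, w) \<in> lfrac Q c s"
    then obtain u where w: "w \<notin> Q" and u: "u \<notin> Q" and h: "u * (c * w - x * s) = 0"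
      unfolding lfrac_def by blast
    have "(e * u * s) * (0 * w - x * 1) = e * (u * (c * w - x * s)) - (e * c) * (u * w)"
      by (simp add: algebra_simps)
    also have "\<dots> = 0" using h ec by simp
    finally have "(e * u * s) * (0 * w - x * 1) = 0" .
    moreover have "e * u * s \<notin> Q" using P e u s by (simp add: prime_notin_mult)
    ultimately show "(x, w) \<in> lfrac Q 0 1" unfolding lfrac_def using w by blast
  next
    assume "(x, w) \<in> lfrac Q 0 1"
    then obtain u where w: "w \<notin> Q" and u: "u \<notin> Q" and h: "u * (0 * w - x * 1) = 0"
      unfolding lfrac_def by blast
    have "(e * u) * (c * w - x * s) = (e * c) * (u * w) + e * s * (u * (0 * w - x * 1))"
      by (simp add: algebra_simps)
    also have "\<dots> = 0" using h ec by simp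
    finally have "(e * u) * (c * w - x * s) = 0" .
    moreover have "e * u \<notin> Q" using P e u by (simp add: prime_notin_mult)
    ultimately show "(x, w) \<in> lfrac Q c s" unfolding lfrac_def using w by blast
  qed
qed

lemma residue_lfrac_in:
  assumes P: "is_prime_ideal P" and s: "s \<notin> P" and a: "a \<in> P"
  shows "residue P (lfrac P a s) = kfrac P 0 1"
proof (rule set_eqI, clarify)
  have I: "is_ideal P" using P by (rule prime_ideal)
  fix b t
  show "(b, t) \<in> residue P (lfrac P a s) \<longleftrightarrow> (b, t) \<in> kfrac P 0 1"
  proof
    assume "(b, t) \<in> residue P (lfrac P a s)"
    then obtain a' s' where t: "t \<notin> P" and m: "(a', s') \<in> lfrac P a s" and h: "a' * t - b * s' \<in> P"
      unfolding residue_def by blast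
    from m obtain v where s': "s' \<notin> P" and v: "v \<notin> P" and e: "v * (a * s' - a' * s) = 0"
      unfolding lfrac_def by blast
    have "v * a' * s = v * a * s'" using e by (simp add: algebra_simps)
    moreover have "v * a * s' \<in> P" using a I by (metis ideal_mult_l ideal_mult_r mult.assoc)
    ultimately have "(v * s) * a' \<in> P" by (simp add: algebra_simps)
    moreover have "v * s \<notin> P" using P v s by (simp add: prime_notin_mult)
    ultimately have a': "a' \<in> P" using prime_mult_in[OF P] by blast
    have "b * s' = a' * t - (a' * t - b * s')" by simp
    also have "\<dots> \<in> P" using ideal_diff[OF I ideal_mult_r[OF I a'] h] .
    finally have "b \<in> P" using prime_mult_in[OF P] s' by blast
    then have "0 * t - b * 1 \<in> P" using I by (simp add: ideal_uminus)
    then show "(b, t) \<in> kfrac P 0 1" unfolding kfrac_def using t by blast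
  next
    assume "(b, t) \<in> kfrac P 0 1"
    then have t: "t \<notin> P" and "- b \<in> P" unfolding kfrac_def by auto
    then have "b \<in> P" using I ideal_uminus by fastforce
    then have "a * t - b * s \<in> P" using a I by (simp add: ideal_diff ideal_mult_r)
    then show "(b, t) \<in> residue P (lfrac P a s)"
      unfolding residue_def using t lfrac_self[OF P s, of a] by blast
  qed
qed

definition gen :: "('a::comm_ring_1 \<Rightarrow> 'a) set \<Rightarrow> 'a set \<Rightarrow> 'a set" where
  "gen \<Delta> E = \<Inter>{I. differential_ideal \<Delta> I \<and> E \<subseteq> I}"

lemma gen_diff: "differential_ideal \<Delta> (gen \<Delta> E)"
  unfolding gen_def differential_ideal_def is_ideal_def
  by (intro conjI ballI allI impI; simp)

lemma gen_sub: "E \<subseteq> gen \<Delta> E"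
  unfolding gen_def by blast

lemma gen_least: "differential_ideal \<Delta> I \<Longrightarrow> E \<subseteq> I \<Longrightarrow> gen \<Delta> E \<subseteq> I"
  unfolding gen_def by blast

lemma gen_mono: "E \<subseteq> E' \<Longrightarrow> gen \<Delta> E \<subseteq> gen \<Delta> E'"
  unfolding gen_def by blast

lemma zero_diff_ideal: "\<forall>d\<in>\<Delta>. is_derivation d \<Longrightarrow> differential_ideal \<Delta> {0}"
  unfolding differential_ideal_def is_ideal_def by (auto simp: deriv_zero)


lemma ker_sub_nil:
  fixes \<Delta> :: "('a::comm_ring_1 \<Rightarrow> 'a) set"
  assumes K: "keigher_ring \<Delta>" and f: "f \<in> kernel_phi \<Delta> (dspec \<Delta>)"
  shows "f \<in> nilradicalO \<Delta> (dspec \<Delta>)"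
proof -
  define X where "X = dspec \<Delta>"
  have D: "\<forall>d\<in>\<Delta>. is_derivation d" using K by (simp add: keigher_ring_def differential_ring_def)
  have fO: "f \<in> sheafO \<Delta> X" and fk: "\<And>P. P \<in> X \<Longrightarrow> residue P (f P) = kfrac P 0 1"
    using f unfolding kernel_phi_def phi_def X_def by auto
  have Xprime: "\<And>Q. Q \<in> X \<Longrightarrow> is_prime_ideal Q" unfolding X_def dspec_def by blast
  have Xdiff: "\<And>Q. Q \<in> X \<Longrightarrow> differential_ideal \<Delta> Q"
    unfolding X_def dspec_def differential_ideal_def is_prime_ideal_def by blast
  have loc: "\<exists>e a b. e \<notin> P \<and> (\<forall>Q\<in>X. e \<notin> Q \<longrightarrow> b \<notin> Q \<and> f Q = lfrac Q a b \<and> a \<in> Q)"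
    if P: "P \<in> X" for P
  proof -
    have "regular_at \<Delta> X f P" using fO P unfolding sheafO_def by blast
    then obtain W a b where W: "kolchin_open \<Delta> W" "P \<in> W" "W \<subseteq> X"
      and fW: "\<forall>Q\<in>W. b \<notin> Q \<and> f Q = lfrac Q a b" unfolding regular_at_def by blast
    then obtain E where E: "W = {Q \<in> dspec \<Delta>. \<not> E \<subseteq> Q}" unfolding kolchin_open_def by blast
    then obtain e where e: "e \<in> E" "e \<notin> P" using W(2) by blast
    have "b \<notin> Q \<and> f Q = lfrac Q a b \<and> a \<in> Q" if Q: "Q \<in> X" "e \<notin> Q" for Q
    proof -
      have "Q \<in> W" using E Q e unfolding X_def by blast
      then have b: "b \<notin> Q" and fQ: "f Q = lfrac Q a b" using fW by auto
      have pQ: "is_prime_ideal Q" using Xprime Q by blast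
      have "(a, b) \<in> lfrac Q a b \<and> a * b - a * b \<in> Q"
        using lfrac_self[OF pQ b, of a] ideal_zero[OF prime_ideal[OF pQ]] by simp
      then have "(a, b) \<in> residue Q (lfrac Q a b)"
        unfolding residue_def using b by blast
      then have "(a, b) \<in> kfrac Q 0 1" using fk[OF Q(1)] fQ by simp
      then have "- a \<in> Q" unfolding kfrac_def by simp
      then have "a \<in> Q" using ideal_uminus[OF prime_ideal[OF pQ]] by fastforce
      then show ?thesis using b fQ by blast
    qed
    then show ?thesis using e by blast
  qed
  then obtain e a b where eab: "\<And>P. P \<in> X \<Longrightarrow> e P \<notin> P \<and>
       (\<forall>Q\<in>X. e P \<notin> Q \<longrightarrow> b P \<notin> Q \<and> f Q = lfrac Q (a P) (b P) \<and> a P \<in> Q)"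
    by metis
  have nilp: "\<exists>n. (e P * a P) ^ n = 0" if P: "P \<in> X" for P
  proof (rule ccontr)
    assume "\<nexists>n. (e P * a P) ^ n = 0"
    then have "\<forall>n. (e P * a P) ^ n \<notin> {0}" by simp
    from exists_dprime[OF K zero_diff_ideal[OF D] this]
    obtain Q where Q: "Q \<in> X" and nq: "e P * a P \<notin> Q" unfolding X_def by blast
    have IQ: "is_ideal Q" using Xprime[OF Q] prime_ideal by blast
    show False
    proof (cases "e P \<in> Q")
      case True then show False using nq IQ ideal_mult_r by blast
    next
      case False then have "a P \<in> Q" using eab[OF P] Q by blast
      then show False using nq IQ ideal_mult_l by blast
    qed
  qed
  then obtain n where n: "\<And>P. P \<in> X \<Longrightarrow> (e P * a P) ^ n P = 0" by metis
  define Jg where "Jg = {y. \<exists>F. finite F \<and> F \<subseteq> X \<and> y \<in> gen \<Delta> (e ` F)}"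
  have genF: "\<And>F y. y \<in> gen \<Delta> (e ` F) \<Longrightarrow> F \<subseteq> F' \<Longrightarrow> y \<in> gen \<Delta> (e ` F')" for F'
    using gen_mono by (metis image_mono subsetD)
  have gI: "\<And>F. is_ideal (gen \<Delta> (e ` F))" using gen_diff by (metis differential_ideal_def)
  have Jd: "differential_ideal \<Delta> Jg"
    unfolding differential_ideal_def is_ideal_def
  proof (intro conjI ballI allI impI)
    show "0 \<in> Jg" unfolding Jg_def using ideal_zero[OF gI[of "{}"]] by blast
  next
    fix x y assume "x \<in> Jg" "y \<in> Jg"
    then obtain F G where F: "finite F" "F \<subseteq> X" "x \<in> gen \<Delta> (e ` F)"
      and G: "finite G" "G \<subseteq> X" "y \<in> gen \<Delta> (e ` G)" unfolding Jg_def by blast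
    have "x \<in> gen \<Delta> (e ` (F \<union> G))" "y \<in> gen \<Delta> (e ` (F \<union> G))"
      using genF F(3) G(3) by auto
    then have "x + y \<in> gen \<Delta> (e ` (F \<union> G))" using gI ideal_add by blast
    then show "x + y \<in> Jg" unfolding Jg_def using F G by blast
  next
    fix x assume "x \<in> Jg"
    then obtain F where F: "finite F" "F \<subseteq> X" "x \<in> gen \<Delta> (e ` F)" unfolding Jg_def by blast
    then have "- x \<in> gen \<Delta> (e ` F)" using gI ideal_uminus by blast
    then show "- x \<in> Jg" unfolding Jg_def using F by blast
  next
    fix r x assume "x \<in> Jg"
    then obtain F where F: "finite F" "F \<subseteq> X" "x \<in> gen \<Delta> (e ` F)" unfolding Jg_def by blast
    then have "r * x \<in> gen \<Delta> (e ` F)" using gI ideal_mult_l by blast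
    then show "r * x \<in> Jg" unfolding Jg_def using F by blast
  next
    fix d x assume d: "d \<in> \<Delta>" and "x \<in> Jg"
    then obtain F where F: "finite F" "F \<subseteq> X" "x \<in> gen \<Delta> (e ` F)" unfolding Jg_def by blast
    then have "d x \<in> gen \<Delta> (e ` F)" using gen_diff d unfolding differential_ideal_def by blast
    then show "d x \<in> Jg" unfolding Jg_def using F by blast
  qed
  have "1 \<in> Jg"
  proof (rule ccontr)
    assume "1 \<notin> Jg"
    then have "\<forall>m. (1::'a) ^ m \<notin> Jg" by simp
    from exists_dprime[OF K Jd this] obtain Q where Q: "Q \<in> X" and JQ: "Jg \<subseteq> Q"
      unfolding X_def by blast
    have "e Q \<in> gen \<Delta> (e ` {Q})" using gen_sub by blast
    then have "e Q \<in> Jg" unfolding Jg_def using Q by blast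
    then show False using JQ eab[OF Q] by blast
  qed
  then obtain F where F: "finite F" "F \<subseteq> X" "1 \<in> gen \<Delta> (e ` F)" unfolding Jg_def by blast
  define N where "N = (\<Sum>P\<in>F. n P)"
  have "loc_pow Q (f Q) N = lfrac Q 0 1" if Q: "Q \<in> X" for Q
  proof -
    have pQ: "is_prime_ideal Q" using Xprime Q by blast
    have "\<exists>P\<in>F. e P \<notin> Q"
    proof (rule ccontr)
      assume "\<not> (\<exists>P\<in>F. e P \<notin> Q)"
      then have "e ` F \<subseteq> Q" by blast
      then have "gen \<Delta> (e ` F) \<subseteq> Q" using gen_least Xdiff[OF Q] by blast
      then show False using F(3) prime_one[OF pQ] by blast
    qed
    then obtain P where P: "P \<in> F" and eP: "e P \<notin> Q" by blast
    have PX: "P \<in> X" using P F by blast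
    have bQ: "b P \<notin> Q" and fQ: "f Q = lfrac Q (a P) (b P)" using eab[OF PX] Q eP by auto
    have "n P \<le> N" unfolding N_def using P F(1) by (simp add: member_le_sum)
    then have "(e P * a P) ^ N = 0" using n[OF PX] by (metis le_add_diff_inverse power_add mult_zero_left)
    then have "e P ^ N * a P ^ N = 0" by (simp add: power_mult_distrib)
    then have "lfrac Q (a P ^ N) (b P ^ N) = lfrac Q 0 1"
      using lfrac_zero[OF pQ prime_pow[OF pQ eP] prime_pow[OF pQ bQ]] by blast
    then show ?thesis using fQ loc_pow_lfrac[OF pQ bQ] by simp
  qed
  then show ?thesis using f unfolding nilradicalO_def kernel_phi_def X_def by blast
qed

lemma nil_sub_ker:
  fixes \<Delta> :: "('a::comm_ring_1 \<Rightarrow> 'a) set"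
  assumes f: "f \<in> nilradicalO \<Delta> (dspec \<Delta>)"
  shows "f \<in> kernel_phi \<Delta> (dspec \<Delta>)"
proof -
  define X where "X = dspec \<Delta>"
  obtain n where fO: "f \<in> sheafO \<Delta> X" and nf: "\<And>P. P \<in> X \<Longrightarrow> loc_pow P (f P) n = lfrac P 0 1"
    using f unfolding nilradicalO_def X_def by blast
  have "phi X f P = kfrac P 0 1" if P: "P \<in> X" for P
  proof -
    have pP: "is_prime_ideal P" using P unfolding X_def dspec_def by blast
    have "f P \<in> loc P" using fO P unfolding sheafO_def by blast
    then obtain a s where s: "s \<notin> P" and fP: "f P = lfrac P a s" unfolding loc_def by blast
    have "lfrac P (a ^ n) (s ^ n) = lfrac P 0 1" using nf[OF P] fP loc_pow_lfrac[OF pP s] by simp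
    moreover have "(0, 1) \<in> lfrac P 0 1" using lfrac_self[OF pP prime_one[OF pP]] .
    ultimately have "(0, 1) \<in> lfrac P (a ^ n) (s ^ n)" by simp
    then obtain u where u: "u \<notin> P" and "u * (a ^ n * 1 - 0 * s ^ n) = 0" unfolding lfrac_def by blast
    then have "u * a ^ n = 0" by simp
    then have "u * a ^ n \<in> P" using ideal_zero[OF prime_ideal[OF pP]] by simp
    then have "a ^ n \<in> P" using prime_mult_in[OF pP] u by blast
    then have "a \<in> P" using prime_pow[OF pP] by blast
    then show ?thesis unfolding phi_def using P fP residue_lfrac_in[OF pP s] by simp
  qed
  then show ?thesis using fO unfolding kernel_phi_def X_def by blast
qed

theorem proposition3p1:
  fixes \<Delta> :: "('a::comm_ring_1 \<Rightarrow> 'a) set"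
  assumes "keigher_ring \<Delta>"
  shows "kernel_phi \<Delta> (dspec \<Delta>) = nilradicalO \<Delta> (dspec \<Delta>)"
  using ker_sub_nil[OF assms] nil_sub_ker by blast

end
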